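(* Let $m\ge 2$, $k=2$ (the Bradley--Terry paired comparison model) and $\pi\in\mathbb{R}^m_{>0}$. A Bradley--Terry design $\xi^*=(w^*_{uv})_{u<v}$ is locally $D$-optimal if and only if (i) $w^*_{uv}\ge0$ for all $1\le u<v\le m$, (ii) $\Gamma_{uv}(\xi^* )\le\overline{\Gamma}_{uv}$ for all $u< v$, and (iii) $(\Gamma_{uv}(\xi^* )-\overline{\Gamma}_{uv})\,w^*_{uv}=0$ for all $u<v$, where $\overline{\Gamma}_{uv}=(m-1)/\lambda_{uv}$.
   Context: Bradley--Terry model: alternatives $[m]$ with parameters $\pi_i>0$; choice sets are all pairs $\{u,v\}$; in pair $\{u,v\}$, $u$ is chosen with probability $\pi_u/(\pi_u+\pi_v)$. A design is $\xi=(w_{uv})_{u<v}$ with $w_{uv}\ge0$ and $\sum w_{uv}=1$. Let $\lambda_{uv}=\pi_u\pi_v/(\pi_u+\pi_v)^2$. The information matrix $M(\xi)$ is the $m\times m$ Laplacian with $M_{uv}=-\lambda_{uv}w_{uv}$ for $u\neq v$ and zero row sums; $M^{(m)}(\xi)$ deletes the $m$-th row and column; $\xi^*$ is locally $D$-optimal if it maximizes $\log\det M^{(m)}(\xi)$ over all designs. $\Gamma(\xi)$ is the Farris transform of $\Sigma=M^{(m)}(\xi)^{-1}$: $\Gamma_{uv}=\Sigma_{uu}+\Sigma_{vv}-2\Sigma_{uv}$ for $u,v<m$, $\Gamma_{um}=\Gamma_{mu}=\Sigma_{uu}$, $\Gamma_{mm}=0$. *)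

theory Defs
  imports "Jordan_Normal_Form.Determinant"
begin

(* Alternatives are indexed 0,...,m-1; the "m-th" alternative of the paper is index m-1.
   A design is given by weights w u v for 0 <= u < v < m (values off this range are ignored). *)

definition bt_lambda :: "(nat \<Rightarrow> real) \<Rightarrow> nat \<Rightarrow> nat \<Rightarrow> real" where
  "bt_lambda \<pi> u v = \<pi> u * \<pi> v / (\<pi> u + \<pi> v)^2"

definition pairs :: "nat \<Rightarrow> (nat \<times> nat) set" where
  "pairs m = {(u, v). u < v \<and> v < m}"

definition is_design :: "nat \<Rightarrow> (nat \<Rightarrow> nat \<Rightarrow> real) \<Rightarrow> bool" where
  "is_design m w \<longleftrightarrow> (\<forall>(u, v) \<in> pairs m. 0 \<le> w u v) \<and> (\<Sum>(u, v)\<in>pairs m. w u v) = 1"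

definition sym_w :: "(nat \<Rightarrow> nat \<Rightarrow> real) \<Rightarrow> nat \<Rightarrow> nat \<Rightarrow> real" where
  "sym_w w u v = w (min u v) (max u v)"

definition info_mat :: "nat \<Rightarrow> (nat \<Rightarrow> real) \<Rightarrow> (nat \<Rightarrow> nat \<Rightarrow> real) \<Rightarrow> real mat" where
  "info_mat m \<pi> w = mat m m (\<lambda>(u, v).
      if u = v then (\<Sum>t\<in>{0..<m} - {u}. bt_lambda \<pi> u t * sym_w w u t)
      else - bt_lambda \<pi> u v * sym_w w u v)"

definition info_mat_red :: "nat \<Rightarrow> (nat \<Rightarrow> real) \<Rightarrow> (nat \<Rightarrow> nat \<Rightarrow> real) \<Rightarrow> real mat" where
  "info_mat_red m \<pi> w = mat (m - 1) (m - 1) (\<lambda>(u, v). info_mat m \<pi> w $$ (u, v))"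

definition locally_D_optimal :: "nat \<Rightarrow> (nat \<Rightarrow> real) \<Rightarrow> (nat \<Rightarrow> nat \<Rightarrow> real) \<Rightarrow> bool" where
  "locally_D_optimal m \<pi> w \<longleftrightarrow> is_design m w \<and> 0 < det (info_mat_red m \<pi> w) \<and>
     (\<forall>w'. is_design m w' \<longrightarrow> 0 < det (info_mat_red m \<pi> w') \<longrightarrow>
        ln (det (info_mat_red m \<pi> w')) \<le> ln (det (info_mat_red m \<pi> w)))"

definition mat_inv :: "nat \<Rightarrow> real mat \<Rightarrow> real mat" where
  "mat_inv n A = (THE S. S \<in> carrier_mat n n \<and> A * S = 1\<^sub>m n \<and> S * A = 1\<^sub>m n)"

definition Gamma :: "nat \<Rightarrow> (nat \<Rightarrow> real) \<Rightarrow> (nat \<Rightarrow> nat \<Rightarrow> real) \<Rightarrow> nat \<Rightarrow> nat \<Rightarrow> real" where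
  "Gamma m \<pi> w u v = (let S = mat_inv (m - 1) (info_mat_red m \<pi> w) in
     if u = m - 1 \<and> v = m - 1 then 0
     else if v = m - 1 then S $$ (u, u)
     else if u = m - 1 then S $$ (v, v)
     else S $$ (u, u) + S $$ (v, v) - 2 * S $$ (u, v))"

definition Gamma_bar :: "nat \<Rightarrow> (nat \<Rightarrow> real) \<Rightarrow> nat \<Rightarrow> nat \<Rightarrow> real" where
  "Gamma_bar m \<pi> u v = (real m - 1) / bt_lambda \<pi> u v"

end

theory Submission
  imports Defs "Jordan_Normal_Form.Schur_Decomposition" "Jordan_Normal_Form.Char_Poly"
begin


definition dl :: "nat \<Rightarrow> nat \<Rightarrow> nat \<Rightarrow> 'a::ring_1" where
  "dl u v i = (if i = u then 1 else 0) - (if i = v then 1 else 0)"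

lemma sum_pairs: "(\<Sum>p\<in>pairs m. f p) = (\<Sum>u<m. \<Sum>v<m. if u < v then f (u,v) else 0)"
proof -
  have "pairs m = {p \<in> {..<m} \<times> {..<m}. fst p < snd p}" unfolding pairs_def by auto
  hence "(\<Sum>p\<in>pairs m. f p) = (\<Sum>p\<in>{..<m} \<times> {..<m}. if fst p < snd p then f p else 0)"
    by (simp add: sum.inter_filter)
  also have "\<dots> = (\<Sum>u<m. \<Sum>v<m. if u < v then f (u,v) else 0)"
    unfolding sum.cartesian_product by (intro sum.cong) auto
  finally show ?thesis .
qed

lemma bt_lambda_sym: "bt_lambda \<pi> u v = bt_lambda \<pi> v u"
  unfolding bt_lambda_def by (simp add: add.commute mult.commute)

lemma sum_if_out: "(\<Sum>v\<in>A. if P then f v else 0) = (if P then (\<Sum>v\<in>A. f v) else 0)"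
  by simp

lemma bt_lambda_minmax: "bt_lambda \<pi> u v = bt_lambda \<pi> (min u v) (max u v)"
  by (cases "u \<le> v") (auto simp: min_def max_def bt_lambda_sym)

lemma dl_prod: "u < v \<Longrightarrow> (dl u v i * dl u v j :: 'a::ring_1) =
  (if i = j then (if i = u \<or> i = v then 1 else 0)
   else (if (u = i \<and> v = j) \<or> (u = j \<and> v = i) then -1 else 0))"
  unfolding dl_def by auto

lemma info_entry:
  assumes "i < m" "j < m"
  shows "info_mat m \<pi> w $$ (i,j) =
    (\<Sum>(u,v)\<in>pairs m. w u v * bt_lambda \<pi> u v * dl u v i * dl u v j)"
proof -
  define c where "c u v = w u v * bt_lambda \<pi> u v" for u v
  have "(\<Sum>(u,v)\<in>pairs m. w u v * bt_lambda \<pi> u v * dl u v i * dl u v j)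
     = (\<Sum>u<m. \<Sum>v<m. if u < v then c u v * (dl u v i * dl u v j) else 0)"
    by (subst sum_pairs) (auto intro!: sum.cong simp: c_def mult.assoc)
  also have "\<dots> = (\<Sum>u<m. \<Sum>v<m. if u < v then c u v * 
     (if i = j then (if i = u \<or> i = v then 1 else 0)
      else (if (u = i \<and> v = j) \<or> (u = j \<and> v = i) then -1 else 0)) else 0)"
    by (intro sum.cong refl) (simp add: dl_prod)
  finally have R: "(\<Sum>(u,v)\<in>pairs m. w u v * bt_lambda \<pi> u v * dl u v i * dl u v j) = \<dots>" .
  show ?thesis
  proof (cases "i = j")
    case True
    have L: "info_mat m \<pi> w $$ (i,j) = (\<Sum>t\<in>{..<m} - {i}. c (min i t) (max i t))"
      using assms True unfolding info_mat_def c_def sym_w_def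
      by (auto intro!: sum.cong simp: lessThan_atLeast0 bt_lambda_minmax[of \<pi> j])
    also have "\<dots> = (\<Sum>t<m. if t \<noteq> i then c (min i t) (max i t) else 0)"
      by (simp add: sum.If_cases Diff_eq Int_commute Compl_eq)
    also have "\<dots> = (\<Sum>t<m. (if i < t then c i t else 0) + (if t < i then c t i else 0))"
      by (intro sum.cong refl) auto
    also have "\<dots> = (\<Sum>v<m. if i < v then c i v else 0) + (\<Sum>u<m. if u < i then c u i else 0)"
      by (simp add: sum.distrib)
    also have "\<dots> = (\<Sum>u<m. \<Sum>v<m. if u < v then c u v * (if i = u \<or> i = v then 1 else 0) else 0)"
    proof -
      have "(\<Sum>u<m. \<Sum>v<m. if u < v then c u v * (if i = u \<or> i = v then 1 else 0) else 0)
        = (\<Sum>u<m. \<Sum>v<m. (if u = i then (if i < v then c i v else 0) else 0) + (if v = i then (if u < i then c u i else 0) else 0))"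
        by (intro sum.cong refl) auto
      also have "\<dots> = (\<Sum>v<m. if i < v then c i v else 0) + (\<Sum>u<m. if u < i then c u i else 0)"
        using assms by (simp add: sum.distrib sum.delta sum_if_out)
      finally show ?thesis by simp
    qed
    finally have L2: "info_mat m \<pi> w $$ (i,j) = (\<Sum>u<m. \<Sum>v<m. if u < v then c u v * (if i = u \<or> i = v then 1 else 0) else 0)" .
    have R2: "(\<Sum>(u,v)\<in>pairs m. w u v * bt_lambda \<pi> u v * dl u v i * dl u v j) = (\<Sum>u<m. \<Sum>v<m. if u < v then c u v * (if i = u \<or> i = v then 1 else 0) else 0)"
      unfolding R using True by (intro sum.cong refl) simp
    show ?thesis using L2 R2 by argo
  next
    case False
    have "(\<Sum>u<m. \<Sum>v<m. if u < v then c u v * 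
     (if i = j then (if i = u \<or> i = v then 1 else 0)
      else (if (u = i \<and> v = j) \<or> (u = j \<and> v = i) then -1 else 0)) else 0)
      = (\<Sum>u<m. \<Sum>v<m. (if u = i then (if v = j then (if i < j then - c i j else 0) else 0) else 0)
          + (if u = j then (if v = i then (if j < i then - c j i else 0) else 0) else 0))"
      using False by (intro sum.cong refl) auto
    also have "\<dots> = (if i < j then - c i j else 0) + (if j < i then - c j i else 0)"
      using assms by (simp add: sum.distrib sum.delta sum_if_out)
    also have "\<dots> = info_mat m \<pi> w $$ (i,j)"
      using assms False unfolding info_mat_def c_def sym_w_def
      by (auto simp: bt_lambda_sym min_def max_def)
    finally show ?thesis using R by argo
  qed
qed

lemma collapse:
  assumes "u < v" "v \<le> n"
  shows "(\<Sum>i<n. F i * dl u v i) = F u - (if v < n then F v else (0::'a::comm_ring_1))"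
  using assms by (simp add: dl_def right_diff_distrib sum_subtractf sum.delta if_distrib[of "\<lambda>x. F _ * x"] cong: if_cong)

lemma of_real_dl[simp]: "of_real (dl u v i) = dl u v i"
  by (simp add: dl_def)

lemma cnj_dl[simp]: "cnj (dl u v i) = dl u v i"
  by (simp add: dl_def)

definition cf :: "(nat \<Rightarrow> real) \<Rightarrow> (nat \<Rightarrow> nat \<Rightarrow> real) \<Rightarrow> nat \<Rightarrow> nat \<Rightarrow> real" where
  "cf \<pi> w u v = w u v * bt_lambda \<pi> u v"

lemma red_carrier: "info_mat_red m \<pi> w \<in> carrier_mat (m-1) (m-1)"
  unfolding info_mat_red_def by simp

lemma red_entry:
  assumes "i < m - 1" "j < m - 1"
  shows "info_mat_red m \<pi> w $$ (i,j) = (\<Sum>(u,v)\<in>pairs m. cf \<pi> w u v * dl u v i * dl u v j)"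
  using assms unfolding info_mat_red_def cf_def by (simp add: info_entry)

lemma red_entry_c:
  assumes "i < m - 1" "j < m - 1"
  shows "map_mat (of_real :: real \<Rightarrow> 'a::real_field) (info_mat_red m \<pi> w) $$ (i,j) = 
     (\<Sum>(u,v)\<in>pairs m. of_real (cf \<pi> w u v) * dl u v i * dl u v j)"
proof -
  have "map_mat (of_real :: real \<Rightarrow> 'a::real_field) (info_mat_red m \<pi> w) $$ (i,j) = of_real (info_mat_red m \<pi> w $$ (i,j))"
    using assms red_carrier[of m \<pi> w] by auto
  also have "\<dots> = (\<Sum>(u,v)\<in>pairs m. of_real (cf \<pi> w u v) * dl u v i * dl u v j)"
    unfolding red_entry[OF assms] of_real_sum by (intro sum.cong refl) (auto simp: of_real_mult)
  finally show ?thesis .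
qed

definition sv :: "nat \<Rightarrow> 'a::comm_ring_1 vec \<Rightarrow> nat \<Rightarrow> nat \<Rightarrow> 'a" where
  "sv n x u v = (\<Sum>j<n. x $ j * dl u v j)"

lemma red_mult_vec:
  assumes "x \<in> carrier_vec (m-1)" "i < m - 1"
  shows "(map_mat (of_real :: real \<Rightarrow> 'a::real_field) (info_mat_red m \<pi> w) *\<^sub>v x) $ i =
     (\<Sum>(u,v)\<in>pairs m. of_real (cf \<pi> w u v) * dl u v i * sv (m-1) x u v)"
proof -
  have "(map_mat (of_real :: real \<Rightarrow> 'a::real_field) (info_mat_red m \<pi> w) *\<^sub>v x) $ i =
     (\<Sum>j<m-1. map_mat (of_real :: real \<Rightarrow> 'a::real_field) (info_mat_red m \<pi> w) $$ (i,j) * x $ j)"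
    using assms red_carrier[of m \<pi> w] 
    by (auto simp: mult_mat_vec_def scalar_prod_def lessThan_atLeast0 intro!: sum.cong)
  also have "\<dots> = (\<Sum>j<m-1. \<Sum>(u,v)\<in>pairs m. of_real (cf \<pi> w u v) * dl u v i * (x $ j * dl u v j))"
    using assms by (intro sum.cong refl) (simp add: red_entry_c sum_distrib_right sum_distrib_left split_def mult_ac)
  also have "\<dots> = (\<Sum>(u,v)\<in>pairs m. of_real (cf \<pi> w u v) * dl u v i * sv (m-1) x u v)"
    by (subst sum.swap) (simp add: sv_def sum_distrib_left split_def)
  finally show ?thesis .
qed

lemma red_qf:
  assumes "x \<in> carrier_vec (m-1)"
  shows "(\<Sum>i<m-1. cnj (x $ i) * (map_mat complex_of_real (info_mat_red m \<pi> w) *\<^sub>v x) $ i) =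
    of_real (\<Sum>(u,v)\<in>pairs m. cf \<pi> w u v * (cmod (sv (m-1) x u v))^2)"
proof -
  have "(\<Sum>i<m-1. cnj (x $ i) * (map_mat complex_of_real (info_mat_red m \<pi> w) *\<^sub>v x) $ i) =
     (\<Sum>i<m-1. \<Sum>(u,v)\<in>pairs m. of_real (cf \<pi> w u v) * sv (m-1) x u v * (cnj (x $ i) * dl u v i))"
    using assms by (intro sum.cong refl) (simp add: red_mult_vec sum_distrib_left split_def mult_ac)
  also have "\<dots> = (\<Sum>(u,v)\<in>pairs m. of_real (cf \<pi> w u v) * sv (m-1) x u v * cnj (sv (m-1) x u v))"
    by (subst sum.swap) (simp add: sv_def sum_distrib_left split_def cnj_sum)
  also have "\<dots> = of_real (\<Sum>(u,v)\<in>pairs m. cf \<pi> w u v * (cmod (sv (m-1) x u v))^2)"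
    unfolding of_real_sum by (intro sum.cong refl) (simp add: split_def complex_mult_cnj cmod_power2 mult.assoc)
  finally show ?thesis .
qed

definition qf :: "complex mat \<Rightarrow> complex vec \<Rightarrow> complex" where
  "qf M x = (\<Sum>i<dim_vec x. cnj (x $ i) * (M *\<^sub>v x) $ i)"

definition mtrace :: "'a::comm_ring_1 mat \<Rightarrow> 'a" where
  "mtrace M = (\<Sum>i<dim_row M. M $$ (i,i))"

lemma mtrace_comm:
  assumes "A \<in> carrier_mat n k" "B \<in> carrier_mat k n"
  shows "mtrace (A * B) = mtrace (B * A)"
proof -
  have "mtrace (A * B) = (\<Sum>i<n. \<Sum>j<k. A $$ (i,j) * B $$ (j,i))"
    using assms by (auto simp: mtrace_def scalar_prod_def lessThan_atLeast0 intro!: sum.cong)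
  also have "\<dots> = (\<Sum>j<k. \<Sum>i<n. B $$ (j,i) * A $$ (i,j))"
    by (subst sum.swap) (simp add: mult.commute)
  also have "\<dots> = mtrace (B * A)"
    using assms by (auto simp: mtrace_def scalar_prod_def lessThan_atLeast0 intro!: sum.cong)
  finally show ?thesis .
qed

lemma eig:
  fixes A S B :: "real mat"
  assumes A: "A \<in> carrier_mat n n" and S: "S \<in> carrier_mat n n" and B: "B \<in> carrier_mat n n"
    and AS: "A * S = 1\<^sub>m n"
    and posA: "\<And>x. x \<in> carrier_vec n \<Longrightarrow> x \<noteq> 0\<^sub>v n \<Longrightarrow> \<exists>r>0. qf (map_mat of_real A) x = of_real r"
    and nnB: "\<And>x. x \<in> carrier_vec n \<Longrightarrow> \<exists>r\<ge>0. qf (map_mat of_real B) x = of_real r"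
  shows "\<exists>rs. length rs = n \<and> (\<forall>r\<in>set rs. 0 \<le> r) \<and>
     (\<forall>a b. det (a \<cdot>\<^sub>m 1\<^sub>m n + b \<cdot>\<^sub>m (S * B)) = prod_list (map (\<lambda>r. a + b * r) rs)) \<and>
     mtrace (S * B) = sum_list rs"
proof -
  define C where "C = S * B"
  have C: "C \<in> carrier_mat n n" using S B by (simp add: C_def)
  define Cc where "Cc = map_mat complex_of_real C"
  define Ac where "Ac = map_mat complex_of_real A"
  define Bc where "Bc = map_mat complex_of_real B"
  have Cc: "Cc \<in> carrier_mat n n" using C by (simp add: Cc_def)
  have Ac: "Ac \<in> carrier_mat n n" using A by (simp add: Ac_def)
  have Bc: "Bc \<in> carrier_mat n n" using B by (simp add: Bc_def)
  have AC: "Ac * Cc = Bc"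
  proof -
    have "A * C = B" using A S B AS by (simp add: C_def assoc_mult_mat[symmetric, of A n n S n B n])
    hence "map_mat complex_of_real (A * C) = Bc" by (simp add: Bc_def)
    moreover have "map_mat complex_of_real (A * C) = map_mat complex_of_real A * map_mat complex_of_real C"
      by (rule of_real_hom.mat_hom_mult[OF A C])
    ultimately show ?thesis by (simp add: Ac_def Cc_def)
  qed
  obtain es where cp: "char_poly Cc = (\<Prod>a\<leftarrow>es. [:- a, 1:])" and les: "length es = n"
    using char_poly_factorized[OF Cc] by blast
  obtain T P Q where sd: "schur_decomposition Cc es = (T,P,Q)" by (cases "schur_decomposition Cc es") auto
  from schur_decomposition[OF Cc cp sd] have sim: "similar_mat_wit Cc T P Q" and ut: "upper_triangular T"
    and dg: "diag_mat T = es" by auto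
  note simD = similar_mat_witD2[OF Cc sim]
  have T: "T \<in> carrier_mat n n" and P: "P \<in> carrier_mat n n" and Q: "Q \<in> carrier_mat n n" using simD by auto
  have real: "e = of_real (Re e) \<and> 0 \<le> Re e" if e: "e \<in> set es" for e
  proof -
    have "poly (char_poly Cc) e = 0" unfolding cp poly_prod_list prod_list_zero_iff using e by force
    hence "eigenvalue Cc e" using eigenvalue_root_char_poly[OF Cc] by simp
    then obtain x where x: "x \<in> carrier_vec n" "x \<noteq> 0\<^sub>v n" "Cc *\<^sub>v x = e \<cdot>\<^sub>v x"
      unfolding eigenvalue_def eigenvector_def using Cc by auto
    have "Bc *\<^sub>v x = Ac *\<^sub>v (Cc *\<^sub>v x)" using AC Ac Cc x(1) by (metis assoc_mult_mat_vec)
    also have "\<dots> = e \<cdot>\<^sub>v (Ac *\<^sub>v x)" using x(3) mult_mat_vec[OF Ac x(1)] by simp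
    finally have Bx: "Bc *\<^sub>v x = e \<cdot>\<^sub>v (Ac *\<^sub>v x)" .
    have "qf Bc x = e * qf Ac x"
      unfolding qf_def Bx using x(1) Ac by (auto simp: sum_distrib_left mult_ac intro!: sum.cong)
    moreover obtain rA where rA: "rA > 0" "qf Ac x = of_real rA" using posA[OF x(1,2)] by (auto simp: Ac_def)
    moreover obtain rB where rB: "rB \<ge> 0" "qf Bc x = of_real rB" using nnB[OF x(1)] by (auto simp: Bc_def)
    ultimately have "of_real rB = e * of_real rA" by simp
    hence "e = of_real (rB / rA)" using rA by (simp add: field_simps)
    thus ?thesis using rA rB by simp
  qed
  define rs where "rs = map Re es"
  have es_rs: "es = map complex_of_real rs"
    unfolding rs_def by (rule nth_equalityI) (auto intro: real[THEN conjunct1] nth_mem)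
  have "length rs = n" using les by (simp add: rs_def)
  moreover have "\<forall>r\<in>set rs. 0 \<le> r" using real by (auto simp: rs_def)
  moreover have "det (a \<cdot>\<^sub>m 1\<^sub>m n + b \<cdot>\<^sub>m (S * B)) = prod_list (map (\<lambda>r. a + b * r) rs)" for a b
  proof -
    define M where "M = a \<cdot>\<^sub>m 1\<^sub>m n + b \<cdot>\<^sub>m C"
    define X where "X = complex_of_real a \<cdot>\<^sub>m 1\<^sub>m n + complex_of_real b \<cdot>\<^sub>m T"
    have X: "X \<in> carrier_mat n n" using T by (simp add: X_def)
    have "map_mat complex_of_real M = complex_of_real a \<cdot>\<^sub>m 1\<^sub>m n + complex_of_real b \<cdot>\<^sub>m Cc"
      using C by (intro eq_matI) (auto simp: M_def Cc_def)
    also have "\<dots> = P * X * Q"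
    proof -
      have "P * X = complex_of_real a \<cdot>\<^sub>m P + complex_of_real b \<cdot>\<^sub>m (P * T)"
      proof -
        have "P * X = P * (complex_of_real a \<cdot>\<^sub>m 1\<^sub>m n) + P * (complex_of_real b \<cdot>\<^sub>m T)"
          unfolding X_def by (rule mult_add_distrib_mat[OF P]) (use T in auto)
        also have "P * (complex_of_real a \<cdot>\<^sub>m 1\<^sub>m n) = complex_of_real a \<cdot>\<^sub>m P"
          using mult_smult_distrib[OF P one_carrier_mat[of n]] P by simp
        also have "P * (complex_of_real b \<cdot>\<^sub>m T) = complex_of_real b \<cdot>\<^sub>m (P * T)"
          using mult_smult_distrib[OF P T] by simp
        finally show ?thesis .
      qed
      hence "P * X * Q = (complex_of_real a \<cdot>\<^sub>m (P * Q) + complex_of_real b \<cdot>\<^sub>m (P * T * Q))"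
        using P T Q by (simp add: add_mult_distrib_mat[of _ n n _ Q n] mult_smult_assoc_mat[of _ n n Q n])
      thus ?thesis using simD by simp
    qed
    finally have eqM: "map_mat complex_of_real M = P * X * Q" .
    have "complex_of_real (det M) = det (map_mat complex_of_real M)" by (rule of_real_hom.hom_det[symmetric])
    hence "complex_of_real (det M) = det (P * X * Q)" using eqM by simp
    also have "\<dots> = det P * det X * det Q" using P X Q by (simp add: det_mult[of _ n])
    also have "det P * det Q = 1" using simD P Q det_mult[OF P Q] by simp
    hence "det P * det X * det Q = det X" by (simp add: mult_ac)
    also have "det X = prod_list (diag_mat X)"
      by (rule det_upper_triangular[OF _ X]) (use ut T in \<open>auto simp: X_def upper_triangular_def\<close>)
    also have "diag_mat X = map (\<lambda>e. complex_of_real a + complex_of_real b * e) es"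
      using T X dg[symmetric] by (auto simp: diag_mat_def X_def)
    finally have "complex_of_real (det M) = complex_of_real (prod_list (map (\<lambda>r. a + b * r) rs))"
      by (simp add: es_rs o_def of_real_hom.hom_prod_list)
    thus ?thesis by (simp add: M_def C_def)
  qed
  moreover have "mtrace (S * B) = sum_list rs"
  proof -
    have "complex_of_real (mtrace C) = mtrace Cc"
      using C unfolding mtrace_def Cc_def by (simp add: of_real_sum)
    also have "\<dots> = mtrace ((P * T) * Q)" using simD(3) by (simp only:)
    also have "\<dots> = mtrace (Q * (P * T))" using P T Q by (intro mtrace_comm[of _ n n]) auto
    also have "Q * (P * T) = T"
    proof -
      have "Q * (P * T) = (Q * P) * T" using assoc_mult_mat[OF Q P T] by (rule sym)
      also have "\<dots> = T" using simD(2) T by simp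
      finally show ?thesis .
    qed
    also have "mtrace T = sum_list es"
      using T dg[symmetric] by (simp add: mtrace_def diag_mat_def interv_sum_list_conv_sum_set_nat lessThan_atLeast0)
    finally have "complex_of_real (mtrace C) = complex_of_real (sum_list rs)"
      unfolding es_rs of_real_hom.hom_sum_list by (simp add: o_def)
    thus ?thesis by (simp add: C_def)
  qed
  ultimately show ?thesis by blast
qed

lemma finite_pairs: "finite (pairs m)"
proof -
  have "pairs m \<subseteq> {..<m} \<times> {..<m}" unfolding pairs_def by auto
  thus ?thesis by (rule finite_subset) auto
qed

lemma bt_lambda_pos: "0 < \<pi> u \<Longrightarrow> 0 < \<pi> v \<Longrightarrow> 0 < bt_lambda \<pi> u v"
  unfolding bt_lambda_def by simp

lemma red_sym: "i < m - 1 \<Longrightarrow> j < m - 1 \<Longrightarrow> info_mat_red m \<pi> w $$ (i,j) = info_mat_red m \<pi> w $$ (j,i)"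
  by (simp add: red_entry mult_ac)

lemma red_transpose: "transpose_mat (info_mat_red m \<pi> w) = info_mat_red m \<pi> w"
  using red_carrier[of m \<pi> w] by (intro eq_matI) (auto simp: red_sym)

lemma inverse_ex:
  fixes L :: "real mat"
  assumes L: "L \<in> carrier_mat n n" and d: "det L \<noteq> 0"
  shows "\<exists>S. S \<in> carrier_mat n n \<and> L * S = 1\<^sub>m n \<and> S * L = 1\<^sub>m n"
proof -
  define S where "S = (1 / det L) \<cdot>\<^sub>m adj_mat L"
  note adj = adj_mat[OF L]
  have S: "S \<in> carrier_mat n n" using adj by (simp add: S_def)
  have "L * S = (1 / det L) \<cdot>\<^sub>m (L * adj_mat L)" unfolding S_def by (rule mult_smult_distrib[OF L adj(1)])
  also have "\<dots> = 1\<^sub>m n" using adj(2) d by (intro eq_matI) auto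
  finally have 1: "L * S = 1\<^sub>m n" .
  have "S * L = (1 / det L) \<cdot>\<^sub>m (adj_mat L * L)" unfolding S_def by (rule mult_smult_assoc_mat[OF adj(1) L])
  also have "\<dots> = 1\<^sub>m n" using adj(3) d by (intro eq_matI) auto
  finally show ?thesis using 1 S by blast
qed

lemma inverse_unique:
  fixes L :: "real mat"
  assumes L: "L \<in> carrier_mat n n" and S: "S \<in> carrier_mat n n" and S': "S' \<in> carrier_mat n n"
    and "L * S = 1\<^sub>m n" and "S' * L = 1\<^sub>m n"
  shows "S' = S"
proof -
  have "S' = S' * (L * S)" using assms right_mult_one_mat[OF S'] by simp
  also have "\<dots> = (S' * L) * S" using assoc_mult_mat[OF S' L S] by simp
  also have "\<dots> = S" using assms by simp
  finally show ?thesis .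
qed

lemma mat_inv_eq:
  fixes L :: "real mat"
  assumes L: "L \<in> carrier_mat n n" and S: "S \<in> carrier_mat n n" and "L * S = 1\<^sub>m n" "S * L = 1\<^sub>m n"
  shows "mat_inv n L = S"
  unfolding mat_inv_def
proof (rule the_equality)
  show "S \<in> carrier_mat n n \<and> L * S = 1\<^sub>m n \<and> S * L = 1\<^sub>m n" using assms by auto
  fix S' assume "S' \<in> carrier_mat n n \<and> L * S' = 1\<^sub>m n \<and> S' * L = 1\<^sub>m n"
  thus "S' = S" using inverse_unique[OF L S, of S'] assms by auto
qed

lemma inverse_sym:
  fixes L :: "real mat"
  assumes L: "L \<in> carrier_mat n n" and S: "S \<in> carrier_mat n n" and LS: "L * S = 1\<^sub>m n" and SL: "S * L = 1\<^sub>m n"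
    and T: "transpose_mat L = L"
  shows "transpose_mat S = S"
proof -
  have "transpose_mat S * L = transpose_mat S * transpose_mat L" using T by simp
  also have "\<dots> = transpose_mat (L * S)" using transpose_mult[OF L S] by simp
  also have "\<dots> = 1\<^sub>m n" using LS by simp
  finally have "transpose_mat S * L = 1\<^sub>m n" .
  thus ?thesis using inverse_unique[OF L S, of "transpose_mat S"] S LS by auto
qed

lemma Gamma_formula:
  assumes "u < v" "v < m" and S: "mat_inv (m - 1) (info_mat_red m \<pi> w) = S"
    and sym: "\<And>i j. i < m - 1 \<Longrightarrow> j < m - 1 \<Longrightarrow> S $$ (i,j) = S $$ (j,i)"
  shows "Gamma m \<pi> w u v = (\<Sum>i<m-1. \<Sum>j<m-1. S $$ (i,j) * dl u v i * dl u v j)"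
proof -
  have v: "v \<le> m - 1" using assms by auto
  have "(\<Sum>i<m-1. \<Sum>j<m-1. S $$ (i,j) * dl u v i * dl u v j)
      = (\<Sum>i<m-1. (\<Sum>j<m-1. S $$ (i,j) * dl u v j) * dl u v i)"
    by (simp add: sum_distrib_right sum_distrib_left mult_ac)
  also have "\<dots> = (\<Sum>i<m-1. (S $$ (i,u) - (if v < m - 1 then S $$ (i,v) else 0)) * dl u v i)"
  proof -
    have inner: "\<And>i. (\<Sum>j<m-1. S $$ (i,j) * dl u v j) = S $$ (i,u) - (if v < m - 1 then S $$ (i,v) else 0)"
      by (rule collapse[OF assms(1) v])
    show ?thesis by (simp only: inner)
  qed
  also have "\<dots> = (S $$ (u,u) - (if v < m - 1 then S $$ (u,v) else 0)) -
      (if v < m - 1 then S $$ (v,u) - (if v < m - 1 then S $$ (v,v) else 0) else 0)"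
    by (rule collapse[OF assms(1) v])
  also have "\<dots> = Gamma m \<pi> w u v"
    using assms unfolding Gamma_def Let_def by (auto simp: sym[of v u])
  finally show ?thesis by simp
qed

lemma trace_formula:
  assumes S: "S \<in> carrier_mat (m-1) (m-1)"
  shows "mtrace (S * info_mat_red m \<pi> w') =
    (\<Sum>(u,v)\<in>pairs m. cf \<pi> w' u v * (\<Sum>i<m-1. \<Sum>j<m-1. S $$ (i,j) * dl u v i * dl u v j))"
proof -
  have "mtrace (S * info_mat_red m \<pi> w') = (\<Sum>i<m-1. \<Sum>j<m-1. S $$ (i,j) * info_mat_red m \<pi> w' $$ (j,i))"
    using S red_carrier[of m \<pi> w'] by (auto simp: mtrace_def scalar_prod_def lessThan_atLeast0 intro!: sum.cong)
  also have "\<dots> = (\<Sum>i<m-1. \<Sum>j<m-1. \<Sum>(u,v)\<in>pairs m. cf \<pi> w' u v * (S $$ (i,j) * dl u v i * dl u v j))"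
    by (intro sum.cong refl) (simp add: red_entry sum_distrib_left split_def mult_ac)
  also have "\<dots> = (\<Sum>(u,v)\<in>pairs m. cf \<pi> w' u v * (\<Sum>i<m-1. \<Sum>j<m-1. S $$ (i,j) * dl u v i * dl u v j))"
    by (simp add: sum_distrib_left sum.swap[of _ _ "pairs m"] split_def)
  finally show ?thesis .
qed

lemma cf_nonneg:
  assumes "\<forall>i<m. 0 < \<pi> i" "\<forall>u v. u < v \<and> v < m \<longrightarrow> 0 \<le> w u v" "(u,v) \<in> pairs m"
  shows "0 \<le> cf \<pi> w u v"
  using assms bt_lambda_pos[of \<pi> u v] unfolding cf_def pairs_def by auto

lemma qf_red:
  assumes "x \<in> carrier_vec (m-1)"
  shows "qf (map_mat complex_of_real (info_mat_red m \<pi> w)) x =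
    of_real (\<Sum>(u,v)\<in>pairs m. cf \<pi> w u v * (cmod (sv (m-1) x u v))^2)"
  using red_qf[OF assms] assms unfolding qf_def by simp

lemma nnB:
  assumes "\<forall>i<m. 0 < \<pi> i" "\<forall>u v. u < v \<and> v < m \<longrightarrow> 0 \<le> w u v" "x \<in> carrier_vec (m-1)"
  shows "\<exists>r\<ge>0. qf (map_mat complex_of_real (info_mat_red m \<pi> w)) x = of_real r"
  unfolding qf_red[OF assms(3)]
  by (intro exI[of _ "(\<Sum>(u,v)\<in>pairs m. cf \<pi> w u v * (cmod (sv (m-1) x u v))^2)"] conjI refl sum_nonneg)
     (use cf_nonneg[OF assms(1,2)] in auto)

lemma posA:
  assumes pi: "\<forall>i<m. 0 < \<pi> i" and w: "\<forall>u v. u < v \<and> v < m \<longrightarrow> 0 \<le> w u v"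
    and d: "det (info_mat_red m \<pi> w) \<noteq> 0"
    and x: "x \<in> carrier_vec (m-1)" "x \<noteq> 0\<^sub>v (m-1)"
  shows "\<exists>r>0. qf (map_mat complex_of_real (info_mat_red m \<pi> w)) x = of_real r"
proof -
  define R where "R = (\<Sum>p\<in>pairs m. cf \<pi> w (fst p) (snd p) * (cmod (sv (m-1) x (fst p) (snd p)))^2)"
  have nn: "\<forall>p\<in>pairs m. 0 \<le> cf \<pi> w (fst p) (snd p) * (cmod (sv (m-1) x (fst p) (snd p)))^2"
    using cf_nonneg[OF pi w] by auto
  have R0: "R \<ge> 0" unfolding R_def using nn by (auto intro!: sum_nonneg)
  have "R \<noteq> 0"
  proof
    assume "R = 0"
    hence z: "\<forall>p\<in>pairs m. cf \<pi> w (fst p) (snd p) * (cmod (sv (m-1) x (fst p) (snd p)))^2 = 0"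
      using sum_nonneg_eq_0_iff[OF finite_pairs nn[rule_format]] unfolding R_def by simp
    have "map_mat complex_of_real (info_mat_red m \<pi> w) *\<^sub>v x = 0\<^sub>v (m-1)"
    proof (rule eq_vecI)
      fix i assume i: "i < dim_vec (0\<^sub>v (m - 1) :: complex vec)"
      have "(map_mat complex_of_real (info_mat_red m \<pi> w) *\<^sub>v x) $ i =
        (\<Sum>(u,v)\<in>pairs m. of_real (cf \<pi> w u v) * dl u v i * sv (m-1) x u v)"
        using i x by (simp add: red_mult_vec)
      also have "\<dots> = 0"
      proof (rule sum.neutral, safe)
        fix u v assume p: "(u,v) \<in> pairs m"
        from z p have "cf \<pi> w u v = 0 \<or> sv (m-1) x u v = 0" by auto
        thus "of_real (cf \<pi> w u v) * dl u v i * sv (m-1) x u v = (0::complex)" by auto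
      qed
      finally show "(map_mat complex_of_real (info_mat_red m \<pi> w) *\<^sub>v x) $ i = 0\<^sub>v (m - 1) $ i"
        using i by simp
    qed (use red_carrier[of m \<pi> w] in simp)
    hence "det (map_mat complex_of_real (info_mat_red m \<pi> w)) = 0"
      using det_0_iff_vec_prod_zero[of "map_mat complex_of_real (info_mat_red m \<pi> w)" "m-1"] x red_carrier[of m \<pi> w]
      by auto
    moreover have "det (map_mat complex_of_real (info_mat_red m \<pi> w)) = complex_of_real (det (info_mat_red m \<pi> w))"
      by (rule of_real_hom.hom_det)
    ultimately show False using d by simp
  qed
  with R0 have "R > 0" by simp
  moreover have "qf (map_mat complex_of_real (info_mat_red m \<pi> w)) x = of_real R"
    unfolding qf_red[OF x(1)] R_def by (simp add: split_def)
  ultimately show ?thesis by blast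
qed

lemma prod_le_one:
  fixes rs :: "real list"
  assumes "\<forall>r\<in>set rs. 0 \<le> r"
  shows "prod_list rs \<le> exp (sum_list rs - length rs)"
  using assms
proof (induction rs)
  case Nil thus ?case by simp
next
  case (Cons r rs)
  have r: "0 \<le> r" and IH: "prod_list rs \<le> exp (sum_list rs - length rs)" using Cons by auto
  have P0: "0 \<le> prod_list rs" using Cons.prems by (induction rs) auto
  have "r \<le> exp (r - 1)" using exp_ge_add_one_self[of "r - 1"] by simp
  hence "r * prod_list rs \<le> exp (r - 1) * exp (sum_list rs - length rs)"
    by (rule mult_mono) (use IH P0 in auto)
  also have "\<dots> = exp (sum_list (r # rs) - length (r # rs))" by (simp add: exp_add[symmetric] algebra_simps)
  finally show ?case by simp
qed

lemma prod_ge: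
  fixes rs :: "real list"
  assumes "\<forall>r\<in>set rs. 0 \<le> r" "0 \<le> a" "0 \<le> b"
  shows "a * prod_list (map (\<lambda>r. a + b * r) rs) \<ge> a ^ (length rs + 1) + a ^ length rs * b * sum_list rs"
  using assms(1)
proof (induction rs)
  case Nil thus ?case by simp
next
  case (Cons r rs)
  have r: "0 \<le> r" and IH: "a * prod_list (map (\<lambda>r. a + b * r) rs) \<ge> a ^ (length rs + 1) + a ^ length rs * b * sum_list rs"
    using Cons by auto
  define k where "k = length rs"
  define S where "S = sum_list rs"
  have S0: "0 \<le> S" unfolding S_def using Cons.prems by (auto intro: sum_list_nonneg)
  have f0: "0 \<le> a + b * r" using assms r by simp
  have "a * prod_list (map (\<lambda>r. a + b * r) (r # rs)) = (a + b * r) * (a * prod_list (map (\<lambda>r. a + b * r) rs))"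
    by (simp add: mult_ac)
  also have "\<dots> \<ge> (a + b * r) * (a ^ (k + 1) + a ^ k * b * S)"
    using IH f0 unfolding k_def S_def by (intro mult_left_mono) auto
  finally have 1: "a * prod_list (map (\<lambda>r. a + b * r) (r # rs)) \<ge> (a + b * r) * (a ^ (k + 1) + a ^ k * b * S)" .
  have "(a + b * r) * (a ^ (k + 1) + a ^ k * b * S) = a ^ (k + 2) + a ^ (k+1) * b * (r + S) + (b * r) * (a ^ k * b * S)"
    by (simp add: algebra_simps power_add)
  moreover have "0 \<le> (b * r) * (a ^ k * b * S)" using assms r S0 by simp
  ultimately have "(a + b * r) * (a ^ (k + 1) + a ^ k * b * S) \<ge> a ^ (k + 2) + a ^ (k+1) * b * (r + S)" by linarith
  with 1 show ?case unfolding k_def S_def by (simp add: add.commute)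
qed

lemma qf_one:
  assumes x: "x \<in> carrier_vec n" "x \<noteq> 0\<^sub>v n"
  shows "\<exists>r>0. qf (map_mat complex_of_real (1\<^sub>m n)) x = of_real r"
proof -
  have M: "map_mat complex_of_real (1\<^sub>m n) = 1\<^sub>m n" by (rule eq_matI) auto
  obtain i where i: "i < n" "x $ i \<noteq> 0" using x by (metis eq_vecI carrier_vecD index_zero_vec dim_vec)
  have "qf (map_mat complex_of_real (1\<^sub>m n)) x = (\<Sum>i<n. cnj (x $ i) * x $ i)"
    unfolding M qf_def using x by simp
  also have "\<dots> = of_real (\<Sum>i<n. (cmod (x $ i))^2)"
    unfolding of_real_sum by (intro sum.cong refl) (simp add: complex_mult_cnj cmod_power2 mult.commute)
  finally have eq: "qf (map_mat complex_of_real (1\<^sub>m n)) x = of_real (\<Sum>i<n. (cmod (x $ i))^2)" .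
  have "0 < (\<Sum>i<n. (cmod (x $ i))^2)"
    by (rule sum_pos2[of _ i]) (use i in auto)
  with eq show ?thesis by blast
qed

lemma det_pos:
  fixes L :: "real mat"
  assumes L: "L \<in> carrier_mat n n" and d: "det L \<noteq> 0"
    and nn: "\<And>x. x \<in> carrier_vec n \<Longrightarrow> \<exists>r\<ge>0. qf (map_mat complex_of_real L) x = of_real r"
  shows "0 < det L"
proof -
  obtain rs where rs: "length rs = n" "\<forall>r\<in>set rs. 0 \<le> r"
    "\<forall>a b. det (a \<cdot>\<^sub>m 1\<^sub>m n + b \<cdot>\<^sub>m (1\<^sub>m n * L)) = prod_list (map (\<lambda>r. a + b * r) rs)"
    using eig[OF one_carrier_mat one_carrier_mat L _ qf_one nn] by auto
  have "0 \<cdot>\<^sub>m 1\<^sub>m n + 1 \<cdot>\<^sub>m (1\<^sub>m n * L) = L" using L by (intro eq_matI) auto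
  hence "det L = prod_list rs" using rs(3)[rule_format, of 0 1] by simp
  moreover have "0 \<le> prod_list rs" using rs(2) by (induction rs) auto
  ultimately show ?thesis using d by (simp add: less_le)
qed

lemma red_lin:
  "info_mat_red m \<pi> (\<lambda>u v. a * w u v + b * e u v) = a \<cdot>\<^sub>m info_mat_red m \<pi> w + b \<cdot>\<^sub>m info_mat_red m \<pi> e"
proof (rule eq_matI)
  fix i j assume ij: "i < dim_row (a \<cdot>\<^sub>m info_mat_red m \<pi> w + b \<cdot>\<^sub>m info_mat_red m \<pi> e)"
     "j < dim_col (a \<cdot>\<^sub>m info_mat_red m \<pi> w + b \<cdot>\<^sub>m info_mat_red m \<pi> e)"
  hence ij': "i < m - 1" "j < m - 1" using red_carrier[of m \<pi> w] red_carrier[of m \<pi> e] by auto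
  have cfl: "cf \<pi> (\<lambda>u v. a * w u v + b * e u v) u v = a * cf \<pi> w u v + b * cf \<pi> e u v" for u v
    by (simp add: cf_def algebra_simps)
  have "info_mat_red m \<pi> (\<lambda>u v. a * w u v + b * e u v) $$ (i, j) =
     (\<Sum>p\<in>pairs m. a * (cf \<pi> w (fst p) (snd p) * dl (fst p) (snd p) i * dl (fst p) (snd p) j)
        + b * (cf \<pi> e (fst p) (snd p) * dl (fst p) (snd p) i * dl (fst p) (snd p) j))"
    unfolding red_entry[OF ij'] split_def cfl by (intro sum.cong refl) (simp add: distrib_right mult.assoc)
  also have "\<dots> = a * info_mat_red m \<pi> w $$ (i, j) + b * info_mat_red m \<pi> e $$ (i, j)"
    unfolding red_entry[OF ij'] split_def sum.distrib sum_distrib_left ..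
  finally show "info_mat_red m \<pi> (\<lambda>u v. a * w u v + b * e u v) $$ (i, j) =
        (a \<cdot>\<^sub>m info_mat_red m \<pi> w + b \<cdot>\<^sub>m info_mat_red m \<pi> e) $$ (i, j)"
    using ij' red_carrier[of m \<pi> w] red_carrier[of m \<pi> e] by simp
qed (simp_all add: info_mat_red_def)

lemma ineq_contra:
  fixes c :: real and n :: nat
  assumes n: "1 \<le> n" and c: "c > real n"
    and H: "\<And>t. 0 < t \<Longrightarrow> t < 1 \<Longrightarrow> (1 - t) ^ n * ((1 - t) + t * c) \<le> 1 - t"
  shows False
proof -
  define k where "k = n - 1"
  have nk: "n = Suc k" using n by (simp add: k_def)
  have c1: "c > 1" using c n by linarith
  define D where "D = real k * (c - 1) + c"
  have D: "D \<ge> c" using c1 by (simp add: D_def)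
  define t where "t = (c - real n) / (2 * D)"
  have t0: "0 < t" using c D c1 by (simp add: t_def)
  have t1: "t < 1" using c D c1 n by (simp add: t_def field_simps)
  have "(1 - t) ^ n * ((1 - t) + t * c) \<le> 1 - t" using H t0 t1 by blast
  hence "(1 - t) * ((1 - t) ^ k * ((1 - t) + t * c)) \<le> (1 - t) * 1" by (simp add: nk mult_ac)
  hence H2: "(1 - t) ^ k * ((1 - t) + t * c) \<le> 1" using t1 by (simp add: mult_le_cancel_left)
  have B: "1 - real k * t \<le> (1 - t) ^ k"
    using Bernoulli_inequality[of "- t" k] t1 by simp
  have pos: "0 \<le> (1 - t) + t * c" using t0 t1 c1 by (smt (verit) mult_pos_pos)
  have "(1 - real k * t) * ((1 - t) + t * c) \<le> (1 - t) ^ k * ((1 - t) + t * c)"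
    by (rule mult_right_mono[OF B pos])
  with H2 have H3: "(1 - real k * t) * ((1 - t) + t * c) \<le> 1" by linarith
  have "(1 - real k * t) * ((1 - t) + t * c) = 1 + t * (c - real n) - t * (real k * (c - 1) * t)"
    by (simp add: nk algebra_simps)
  with H3 have "t * (c - real n) \<le> t * (real k * (c - 1) * t)" by linarith
  hence H4: "c - real n \<le> real k * (c - 1) * t" using t0 by (simp add: mult_le_cancel_left)
  have "real k * (c - 1) * t = (real k * (c - 1)) * (c - real n) / (2 * D)" by (simp add: t_def)
  also have "\<dots> \<le> D * (c - real n) / (2 * D)"
    using c c1 D by (intro divide_right_mono mult_right_mono) (auto simp: D_def)
  also have "\<dots> = (c - real n) / 2" using D c1 by simp
  finally have X1: "real k * (c - 1) * t \<le> (c - real n) / 2" .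
  have X2: "(c - real n) / 2 < c - real n" using c by simp
  show False using X1 X2 H4 by linarith
qed



theorem corollary4p2:
  fixes m :: nat and \<pi> :: "nat \<Rightarrow> real" and w :: "nat \<Rightarrow> nat \<Rightarrow> real"
  assumes "2 \<le> m"
    and "\<forall>i<m. 0 < \<pi> i"
    and "(\<Sum>(u, v)\<in>pairs m. w u v) = 1"
    and "det (info_mat_red m \<pi> w) \<noteq> 0"
  shows "locally_D_optimal m \<pi> w \<longleftrightarrow>
    (\<forall>u v. u < v \<and> v < m \<longrightarrow> 0 \<le> w u v) \<and>
    (\<forall>u v. u < v \<and> v < m \<longrightarrow> Gamma m \<pi> w u v \<le> Gamma_bar m \<pi> u v) \<and>
    (\<forall>u v. u < v \<and> v < m \<longrightarrow> (Gamma m \<pi> w u v - Gamma_bar m \<pi> u v) * w u v = 0)"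
proof -
  define L where "L = info_mat_red m \<pi> w"
  have rmn: "real m - 1 = real (m - 1)" using assms(1) by (simp add: of_nat_diff)
  have L: "L \<in> carrier_mat (m-1) (m-1)" using red_carrier by (simp add: L_def)
  have dL: "det L \<noteq> 0" using assms(4) by (simp add: L_def)
  obtain S where S: "S \<in> carrier_mat (m-1) (m-1)" "L * S = 1\<^sub>m (m-1)" "S * L = 1\<^sub>m (m-1)"
    using inverse_ex[OF L dL] by blast
  have Sinv: "mat_inv (m-1) (info_mat_red m \<pi> w) = S" using mat_inv_eq[OF L S] by (simp add: L_def)
  have ST: "transpose_mat S = S" using inverse_sym[OF L S(1) S(2) S(3)] red_transpose by (simp add: L_def)
  have Ssym: "S $$ (i,j) = S $$ (j,i)" if "i < m - 1" "j < m - 1" for i j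
  proof -
    have "S $$ (i,j) = transpose_mat S $$ (i,j)" using ST by simp
    also have "\<dots> = S $$ (j,i)" using that S(1) by simp
    finally show ?thesis .
  qed
  have Gf: "Gamma m \<pi> w u v = (\<Sum>i<m-1. \<Sum>j<m-1. S $$ (i,j) * dl u v i * dl u v j)" if "u < v" "v < m" for u v
    by (rule Gamma_formula[OF that Sinv Ssym])
  have TR: "mtrace (S * info_mat_red m \<pi> w') = (\<Sum>(u,v)\<in>pairs m. cf \<pi> w' u v * Gamma m \<pi> w u v)" for w'
    unfolding trace_formula[OF S(1)] by (intro sum.cong refl) (auto simp: pairs_def Gf)
  have EIG: "\<exists>rs. length rs = m - 1 \<and> (\<forall>r\<in>set rs. 0 \<le> r) \<and>
     (\<forall>a b. det (a \<cdot>\<^sub>m 1\<^sub>m (m-1) + b \<cdot>\<^sub>m (S * info_mat_red m \<pi> w')) = prod_list (map (\<lambda>r. a + b * r) rs)) \<and>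
     mtrace (S * info_mat_red m \<pi> w') = sum_list rs"
    if w0: "\<forall>u v. u < v \<and> v < m \<longrightarrow> 0 \<le> w u v" and w'0: "\<forall>u v. u < v \<and> v < m \<longrightarrow> 0 \<le> w' u v" for w'
    by (rule eig[OF L S(1) red_carrier S(2)])
      (use posA[OF assms(2) w0 assms(4)] nnB[OF assms(2) w'0] in \<open>auto simp: L_def\<close>)
  have detmul: "det (info_mat_red m \<pi> w') = det L * det (S * info_mat_red m \<pi> w')" for w'
  proof -
    have "L * (S * info_mat_red m \<pi> w') = info_mat_red m \<pi> w'"
      using assoc_mult_mat[OF L S(1) red_carrier, of \<pi> w'] S(2) red_carrier[of m \<pi> w'] by simp
    hence "det (info_mat_red m \<pi> w') = det (L * (S * info_mat_red m \<pi> w'))" by simp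
    also have "\<dots> = det L * det (S * info_mat_red m \<pi> w')"
      by (rule det_mult[OF L]) (use S(1) red_carrier in auto)
    finally show ?thesis .
  qed
  have X01: "0 \<cdot>\<^sub>m 1\<^sub>m (m-1) + 1 \<cdot>\<^sub>m (S * info_mat_red m \<pi> w') = S * info_mat_red m \<pi> w'" for w'
    using S(1) red_carrier[of m \<pi> w'] by (intro eq_matI) auto
  have dpos: "0 < det L" if w0: "\<forall>u v. u < v \<and> v < m \<longrightarrow> 0 \<le> w u v"
    by (rule det_pos[OF L dL]) (use nnB[OF assms(2) w0] in \<open>auto simp: L_def\<close>)
  have lam: "0 < bt_lambda \<pi> u v" if "u < v" "v < m" for u v
    using bt_lambda_pos assms(2) that by auto
  have Gb: "Gamma_bar m \<pi> u v = real (m-1) / bt_lambda \<pi> u v" for u v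
    unfolding Gamma_bar_def rmn ..
  show ?thesis
  proof
    assume opt: "locally_D_optimal m \<pi> w"
    have des: "is_design m w" and optim: "\<And>w'. is_design m w' \<Longrightarrow> 0 < det (info_mat_red m \<pi> w') \<Longrightarrow>
        ln (det (info_mat_red m \<pi> w')) \<le> ln (det L)"
      using opt unfolding locally_D_optimal_def L_def by auto
    have w0: "\<forall>u v. u < v \<and> v < m \<longrightarrow> 0 \<le> w u v" using des unfolding is_design_def pairs_def by auto
    have dLp: "0 < det L" using dpos[OF w0] .
    have ii: "\<forall>u v. u < v \<and> v < m \<longrightarrow> Gamma m \<pi> w u v \<le> Gamma_bar m \<pi> u v"
    proof (intro allI impI)
      fix u0 v0 assume uv: "u0 < v0 \<and> v0 < m"
      define e where "e u v = (if u = u0 \<and> v = v0 then 1 else 0 :: real)" for u v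
      define c where "c = bt_lambda \<pi> u0 v0 * Gamma m \<pi> w u0 v0"
      have uvp: "(u0, v0) \<in> pairs m" using uv by (simp add: pairs_def)
      have e0: "\<forall>u v. u < v \<and> v < m \<longrightarrow> 0 \<le> e u v" by (simp add: e_def)
      obtain rs where rs: "length rs = m - 1" "\<forall>r\<in>set rs. 0 \<le> r"
        "\<forall>a b. det (a \<cdot>\<^sub>m 1\<^sub>m (m-1) + b \<cdot>\<^sub>m (S * info_mat_red m \<pi> e)) = prod_list (map (\<lambda>r. a + b * r) rs)"
        "mtrace (S * info_mat_red m \<pi> e) = sum_list rs"
        using EIG[OF w0 e0] by blast
      have "sum_list rs = (\<Sum>(u,v)\<in>pairs m. cf \<pi> e u v * Gamma m \<pi> w u v)" using rs(4) TR by simp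
      also have "\<dots> = (\<Sum>p\<in>pairs m. if p = (u0, v0) then c else 0)"
        by (intro sum.cong refl) (auto simp: cf_def e_def c_def split: if_splits)
      also have "\<dots> = c" using uvp finite_pairs by simp
      finally have sumc: "sum_list rs = c" .
      have c0: "0 \<le> c" using sumc rs(2) by (metis sum_list_nonneg)
      have esum: "(\<Sum>(u,v)\<in>pairs m. e u v) = 1"
      proof -
        have "(\<Sum>(u,v)\<in>pairs m. e u v) = (\<Sum>p\<in>pairs m. if p = (u0, v0) then 1 else 0)"
          by (intro sum.cong refl) (auto simp: e_def split: if_splits)
        also have "\<dots> = 1" using uvp finite_pairs by simp
        finally show ?thesis .
      qed
      have key: "(1 - t) ^ (m-1) * ((1 - t) + t * c) \<le> 1 - t" if t: "0 < t" "t < 1" for t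
      proof -
        define wt where "wt = (\<lambda>u v. (1 - t) * w u v + t * e u v)"
        define E where "E = info_mat_red m \<pi> e"
        have E: "E \<in> carrier_mat (m-1) (m-1)" using red_carrier by (simp add: E_def)
        have SE: "S * E \<in> carrier_mat (m-1) (m-1)" using S(1) E by simp
        have Lt: "info_mat_red m \<pi> wt = (1 - t) \<cdot>\<^sub>m L + t \<cdot>\<^sub>m E"
          unfolding wt_def L_def E_def by (rule red_lin)
        have "L * ((1 - t) \<cdot>\<^sub>m 1\<^sub>m (m-1) + t \<cdot>\<^sub>m (S * E)) = L * ((1 - t) \<cdot>\<^sub>m 1\<^sub>m (m-1)) + L * (t \<cdot>\<^sub>m (S * E))"
          by (rule mult_add_distrib_mat[OF L]) (use SE in auto)
        also have "L * ((1 - t) \<cdot>\<^sub>m 1\<^sub>m (m-1)) = (1 - t) \<cdot>\<^sub>m L"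
          using mult_smult_distrib[OF L one_carrier_mat[of "m-1"]] L by simp
        also have "L * (t \<cdot>\<^sub>m (S * E)) = t \<cdot>\<^sub>m (L * (S * E))"
          by (rule mult_smult_distrib[OF L SE])
        also have "L * (S * E) = E" using assoc_mult_mat[OF L S(1) E] S(2) E by simp
        finally have LX: "L * ((1 - t) \<cdot>\<^sub>m 1\<^sub>m (m-1) + t \<cdot>\<^sub>m (S * E)) = info_mat_red m \<pi> wt"
          using Lt by simp
        define P where "P = prod_list (map (\<lambda>r. (1 - t) + t * r) rs)"
        have "det (info_mat_red m \<pi> wt) = det L * det ((1 - t) \<cdot>\<^sub>m 1\<^sub>m (m-1) + t \<cdot>\<^sub>m (S * E))"
          unfolding LX[symmetric] by (rule det_mult[OF L]) (use SE in auto)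
        hence dt: "det (info_mat_red m \<pi> wt) = det L * P" using rs(3) by (simp add: P_def E_def)
        have PG: "(1 - t) * P \<ge> (1 - t) ^ (m - 1 + 1) + (1 - t) ^ (m - 1) * t * c"
          using prod_ge[OF rs(2), of "1 - t" t] t rs(1) sumc by (simp add: P_def)
        have "0 < (1 - t) ^ (m - 1 + 1) + (1 - t) ^ (m - 1) * t * c" using t c0
          by (intro add_pos_nonneg) auto
        hence "0 < (1 - t) * P" using PG by linarith
        hence P0: "0 < P" using t by (simp add: zero_less_mult_iff)
        have dtp: "0 < det (info_mat_red m \<pi> wt)" using dt dLp P0 by simp
        have "is_design m wt"
        proof -
          have "\<forall>(u, v)\<in>pairs m. 0 \<le> wt u v" using w0 e0 t by (auto simp: pairs_def wt_def)
          moreover have "(\<Sum>(u, v)\<in>pairs m. wt u v) = (1 - t) * (\<Sum>(u, v)\<in>pairs m. w u v) + t * (\<Sum>(u, v)\<in>pairs m. e u v)"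
            by (simp add: wt_def split_def sum.distrib sum_distrib_left)
          ultimately show ?thesis using assms(3) esum by (simp add: is_design_def)
        qed
        from optim[OF this dtp] have "det (info_mat_red m \<pi> wt) \<le> det L"
          using dtp dLp by simp
        hence "det L * P \<le> det L * 1" using dt by simp
        hence "P \<le> 1" using dLp by (simp add: mult_le_cancel_left)
        hence "(1 - t) * P \<le> 1 - t" using t by (simp add: mult_le_cancel_left)
        moreover have "(1 - t) ^ (m - 1 + 1) + (1 - t) ^ (m - 1) * t * c = (1 - t) ^ (m-1) * ((1 - t) + t * c)"
          by (simp add: algebra_simps)
        ultimately show ?thesis using PG by linarith
      qed
      have "c \<le> real (m - 1)"
      proof (rule ccontr)
        assume "\<not> c \<le> real (m - 1)"
        hence "c > real (m - 1)" by simp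
        from ineq_contra[of "m - 1" c, OF _ this key] assms(1) show False by linarith
      qed
      hence "bt_lambda \<pi> u0 v0 * Gamma m \<pi> w u0 v0 \<le> real (m - 1)" by (simp add: c_def)
      thus "Gamma m \<pi> w u0 v0 \<le> Gamma_bar m \<pi> u0 v0"
        using lam[of u0 v0] uv unfolding Gb by (simp add: field_simps mult.commute)
    qed
    have iii: "\<forall>u v. u < v \<and> v < m \<longrightarrow> (Gamma m \<pi> w u v - Gamma_bar m \<pi> u v) * w u v = 0"
    proof -
      define f where "f p = w (fst p) (snd p) * (real (m - 1) - bt_lambda \<pi> (fst p) (snd p) * Gamma m \<pi> w (fst p) (snd p))" for p
      have f0: "0 \<le> f p" if pp: "p \<in> pairs m" for p
      proof -
        obtain u v where p: "p = (u,v)" "u < v" "v < m" using pp by (auto simp: pairs_def)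
        have "Gamma m \<pi> w u v \<le> real (m-1) / bt_lambda \<pi> u v" using ii p Gb by auto
        hence "bt_lambda \<pi> u v * Gamma m \<pi> w u v \<le> real (m - 1)"
          using lam[OF p(2,3)] by (simp add: field_simps mult.commute)
        thus ?thesis using w0 p by (simp add: f_def)
      qed
      have "mtrace (S * L) = real (m - 1)" using S(3) by (simp add: mtrace_def)
      hence tr: "(\<Sum>(u,v)\<in>pairs m. cf \<pi> w u v * Gamma m \<pi> w u v) = real (m - 1)"
        using TR[of w] by (simp add: L_def)
      have "(\<Sum>p\<in>pairs m. f p) = real (m - 1) * (\<Sum>(u,v)\<in>pairs m. w u v) - (\<Sum>(u,v)\<in>pairs m. cf \<pi> w u v * Gamma m \<pi> w u v)"
        by (simp add: f_def cf_def split_def sum_distrib_left sum_subtractf algebra_simps)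
      also have "\<dots> = 0" using tr assms(3) by simp
      finally have "\<forall>p\<in>pairs m. f p = 0" using sum_nonneg_eq_0_iff[OF finite_pairs f0] by simp
      thus ?thesis
      proof (intro allI impI)
        fix u v assume fz: "\<forall>p\<in>pairs m. f p = 0" and uv: "u < v \<and> v < m"
        hence "f (u,v) = 0" by (auto simp: pairs_def)
        hence "w u v * (real (m - 1) - bt_lambda \<pi> u v * Gamma m \<pi> w u v) = 0" by (simp add: f_def)
        moreover have "(Gamma m \<pi> w u v - Gamma_bar m \<pi> u v) * w u v =
           - (w u v * (real (m - 1) - bt_lambda \<pi> u v * Gamma m \<pi> w u v)) / bt_lambda \<pi> u v"
          using lam[of u v] uv unfolding Gb by (simp add: field_simps)
        ultimately show "(Gamma m \<pi> w u v - Gamma_bar m \<pi> u v) * w u v = 0" by simp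
      qed
    qed
    show "(\<forall>u v. u < v \<and> v < m \<longrightarrow> 0 \<le> w u v) \<and>
      (\<forall>u v. u < v \<and> v < m \<longrightarrow> Gamma m \<pi> w u v \<le> Gamma_bar m \<pi> u v) \<and>
      (\<forall>u v. u < v \<and> v < m \<longrightarrow> (Gamma m \<pi> w u v - Gamma_bar m \<pi> u v) * w u v = 0)"
      using w0 ii iii by blast
  next
    assume R: "(\<forall>u v. u < v \<and> v < m \<longrightarrow> 0 \<le> w u v) \<and>
      (\<forall>u v. u < v \<and> v < m \<longrightarrow> Gamma m \<pi> w u v \<le> Gamma_bar m \<pi> u v) \<and>
      (\<forall>u v. u < v \<and> v < m \<longrightarrow> (Gamma m \<pi> w u v - Gamma_bar m \<pi> u v) * w u v = 0)"
    hence w0: "\<forall>u v. u < v \<and> v < m \<longrightarrow> 0 \<le> w u v"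
      and ii: "\<forall>u v. u < v \<and> v < m \<longrightarrow> Gamma m \<pi> w u v \<le> Gamma_bar m \<pi> u v" by auto
    have des: "is_design m w" using w0 assms(3) by (auto simp: is_design_def pairs_def)
    have dLp: "0 < det L" using dpos[OF w0] .
    have "ln (det (info_mat_red m \<pi> w')) \<le> ln (det L)"
      if d': "is_design m w'" and dp: "0 < det (info_mat_red m \<pi> w')" for w'
    proof -
      have w'0: "\<forall>u v. u < v \<and> v < m \<longrightarrow> 0 \<le> w' u v" using d' unfolding is_design_def pairs_def by auto
      have w'1: "(\<Sum>(u,v)\<in>pairs m. w' u v) = 1" using d' unfolding is_design_def by auto
      obtain rs where rs: "length rs = m - 1" "\<forall>r\<in>set rs. 0 \<le> r"
        "\<forall>a b. det (a \<cdot>\<^sub>m 1\<^sub>m (m-1) + b \<cdot>\<^sub>m (S * info_mat_red m \<pi> w')) = prod_list (map (\<lambda>r. a + b * r) rs)"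
        "mtrace (S * info_mat_red m \<pi> w') = sum_list rs"
        using EIG[OF w0 w'0] by blast
      have "sum_list rs = (\<Sum>(u,v)\<in>pairs m. cf \<pi> w' u v * Gamma m \<pi> w u v)" using rs(4) TR by simp
      also have "\<dots> \<le> (\<Sum>(u,v)\<in>pairs m. w' u v * real (m - 1))"
      proof (rule sum_mono)
        fix p assume p: "p \<in> pairs m"
        obtain u v where uv: "p = (u,v)" "u < v" "v < m" using p by (auto simp: pairs_def)
        have "Gamma m \<pi> w u v \<le> real (m-1) / bt_lambda \<pi> u v" using ii uv Gb by auto
        hence "bt_lambda \<pi> u v * Gamma m \<pi> w u v \<le> real (m - 1)"
          using lam[OF uv(2,3)] by (simp add: field_simps mult.commute)
        hence "w' u v * (bt_lambda \<pi> u v * Gamma m \<pi> w u v) \<le> w' u v * real (m - 1)"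
          using w'0 uv by (intro mult_left_mono) auto
        thus "(case p of (u, v) \<Rightarrow> cf \<pi> w' u v * Gamma m \<pi> w u v) \<le> (case p of (u, v) \<Rightarrow> w' u v * real (m - 1))"
          using uv by (simp add: cf_def mult_ac)
      qed
      also have "\<dots> = real (m - 1)" using w'1 by (simp add: split_def sum_distrib_right[symmetric])
      finally have sl: "sum_list rs \<le> real (length rs)" using rs(1) by simp
      have "prod_list rs \<le> exp (sum_list rs - length rs)" by (rule prod_le_one[OF rs(2)])
      also have "\<dots> \<le> 1" using sl by simp
      finally have p1: "prod_list rs \<le> 1" .
      have "det (S * info_mat_red m \<pi> w') = prod_list rs"
        using rs(3)[rule_format, of 0 1] X01[of w'] by simp
      hence "det (info_mat_red m \<pi> w') = det L * prod_list rs" using detmul by simp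
      also have "\<dots> \<le> det L * 1" using p1 dLp by (intro mult_left_mono) auto
      finally have "det (info_mat_red m \<pi> w') \<le> det L" by simp
      thus ?thesis using dp dLp by simp
    qed
    thus "locally_D_optimal m \<pi> w"
      unfolding locally_D_optimal_def using des dLp by (auto simp: L_def)
  qed
qed

end
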